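(* Let $k\ge1$ be an integer and $a>0$ a constant (playing the role of $F^{(k)}(0)$). For $c\in\mathbb R$ define \[ \psi(c)=\frac{\int_0^\infty x\exp\{cx-\frac{a}{(k+1)!}x^{k+1}\}dx}{\int_0^\infty \exp\{cx-\frac{a}{(k+1)!}x^{k+1}\}dx},\qquad b(c)=\sqrt{2\left|-c\,\psi(c)+\frac{a}{k!}\psi(c)^{k+1}\right|}. \] Then $\lim_{c\to-\infty}b(c)=\sqrt2$. *)

theory Defs
  imports "HOL-Analysis.Analysis"
begin

definition wfun :: "nat \<Rightarrow> real \<Rightarrow> real \<Rightarrow> real \<Rightarrow> real" where
  "wfun k a c x = exp (c * x - a / fact (k + 1) * x ^ (k + 1))"

definition psi :: "nat \<Rightarrow> real \<Rightarrow> real \<Rightarrow> real" where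
  "psi k a c = integral {0..} (\<lambda>x. x * wfun k a c x) / integral {0..} (\<lambda>x. wfun k a c x)"

definition bfun :: "nat \<Rightarrow> real \<Rightarrow> real \<Rightarrow> real" where
  "bfun k a c = sqrt (2 * \<bar>- c * psi k a c + a / fact k * psi k a c ^ (k + 1)\<bar>)"

end

theory Submission
  imports Defs "HOL-Probability.Distributions" "HOL-Real_Asymp.Real_Asymp"
begin

lemma mom_int:
  fixes t :: real assumes t: "t > 0"
  shows "((\<lambda>x. x^n * exp (-t*x)) has_integral fact n / t^(n+1)) {0..}"
proof -
  have nn: "(\<integral>\<^sup>+ x. ennreal (erlang_density 0 t x * x ^ n) \<partial>lborel) = ennreal (fact n / t ^ n)"
    using nn_integral_erlang_ith_moment[OF t, of 0 n] by simp
  have "((\<lambda>x. erlang_density 0 t x * x ^ n) has_integral (fact n / t ^ n)) UNIV"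
    by (rule nn_integral_has_integral[OF _ _ nn]) (use t in \<open>auto simp: erlang_density_def\<close>)
  moreover have "(\<lambda>x. erlang_density 0 t x * x ^ n) = (\<lambda>x. if x \<in> {0..} then t * (x^n * exp (-t*x)) else 0)"
    by (auto simp: erlang_density_def fun_eq_iff)
  ultimately have "((\<lambda>x. if x \<in> {0..} then t * (x^n * exp (-t*x)) else 0) has_integral (fact n / t ^ n)) UNIV"
    by simp
  then have "((\<lambda>x. t * (x^n * exp (-t*x))) has_integral (fact n / t ^ n)) {0..}"
    by (simp only: has_integral_restrict_UNIV)
  then have "((\<lambda>x. (1/t) * (t * (x^n * exp (-t*x)))) has_integral (1/t) * (fact n / t ^ n)) {0..}"
    by (rule has_integral_mult_right)
  then show ?thesis using t by (simp add: field_simps)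
qed

lemma mom_bounds:
  fixes t C :: real assumes t: "t > 0" and C: "C \<ge> 0"
  shows "(\<lambda>x. x^n * exp (-t*x - C*x^m)) integrable_on {0..}"
    and "integral {0..} (\<lambda>x. x^n * exp (-t*x - C*x^m)) \<le> fact n / t^(n+1)"
    and "integral {0..} (\<lambda>x. x^n * exp (-t*x - C*x^m)) \<ge> fact n / t^(n+1) - C * (fact (n+m) / t^(n+m+1))"
    and "integral {0..} (\<lambda>x. x^n * exp (-t*x - C*x^m)) \<ge> 0"
proof -
  note I1 = mom_int[OF t, of n]
  note I2 = mom_int[OF t, of "n+m"]
  have le: "x^n * exp (-t*x - C*x^m) \<le> x^n * exp (-t*x)" if "x \<in> {0..}" for x
    using that C by (intro mult_left_mono) auto
  have ge0: "0 \<le> x^n * exp (-t*x - C*x^m)" if "x \<in> {0..}" for x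
    using that by auto
  show int: "(\<lambda>x. x^n * exp (-t*x - C*x^m)) integrable_on {0..}"
  proof (rule measurable_bounded_by_integrable_imp_integrable)
    show "(\<lambda>x. x^n * exp (-t*x - C*x^m)) \<in> borel_measurable (lebesgue_on {0..})"
      by (intro continuous_imp_measurable_on_sets_lebesgue continuous_intros) auto
    show "(\<lambda>x. x^n * exp (-t*x)) integrable_on {0..}" using I1 by blast
  qed (use le ge0 in auto)
  show "integral {0..} (\<lambda>x. x^n * exp (-t*x - C*x^m)) \<le> fact n / t^(n+1)"
    using has_integral_le[OF integrable_integral[OF int] I1] le by blast
  show "integral {0..} (\<lambda>x. x^n * exp (-t*x - C*x^m)) \<ge> 0"
    by (rule integral_nonneg[OF int]) (use ge0 in auto)
  have I3: "((\<lambda>x. x^n * exp (-t*x) - C * (x^(n+m) * exp (-t*x))) has_integral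
        fact n / t^(n+1) - C * (fact (n+m) / t^(n+m+1))) {0..}"
    by (intro has_integral_diff I1 has_integral_mult_right I2)
  have lo: "x^n * exp (-t*x) - C * (x^(n+m) * exp (-t*x)) \<le> x^n * exp (-t*x - C*x^m)"
    if "x \<in> {0..}" for x
  proof -
    have "1 - C*x^m \<le> exp (- (C*x^m))" using exp_ge_add_one_self[of "- (C*x^m)"] by simp
    then have "x^n * exp (-t*x) * (1 - C*x^m) \<le> x^n * exp (-t*x) * exp (- (C*x^m))"
      using that by (intro mult_left_mono) auto
    also have "\<dots> = x^n * exp (-t*x - C*x^m)" by (simp add: exp_diff exp_minus field_simps)
    finally show ?thesis by (simp add: algebra_simps power_add)
  qed
  show "integral {0..} (\<lambda>x. x^n * exp (-t*x - C*x^m)) \<ge> fact n / t^(n+1) - C * (fact (n+m) / t^(n+m+1))"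
    using has_integral_le[OF I3 integrable_integral[OF int]] lo by blast
qed

lemma psi_bounds:
  fixes a c :: real
  assumes a: "a > 0" and c1: "c < -1" and ca: "c < -a"
  shows "1 - a * real (k+2) / (-c) \<le> -c * psi k a c" and "-c * psi k a c \<le> (-c) / (-c - a)"
    and "0 \<le> psi k a c" and "psi k a c \<le> 1 / (-c - a)"
proof -
  define t where "t = -c"
  define C where "C = a / fact (k+1)"
  have t1: "t > 1" and ta: "t > a" using c1 ca by (auto simp: t_def)
  have t0: "t > 0" using t1 by simp
  have C0: "C \<ge> 0" using a by (simp add: C_def)
  have wI: "(\<lambda>x. wfun k a c x) = (\<lambda>x. x^0 * exp (-t*x - C*x^(k+1)))"
    by (simp add: fun_eq_iff wfun_def t_def C_def)
  have wJ: "(\<lambda>x. x * wfun k a c x) = (\<lambda>x. x^1 * exp (-t*x - C*x^(k+1)))"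
    by (simp add: fun_eq_iff wfun_def t_def C_def)
  define I where "I = integral {0..} (\<lambda>x. wfun k a c x)"
  define J where "J = integral {0..} (\<lambda>x. x * wfun k a c x)"
  have psi_eq: "psi k a c = J / I" by (simp add: psi_def I_def J_def)
  have CI: "C * fact (0 + (k+1)) = a" by (simp add: C_def)
  have fJ: "fact (1 + (k+1)) = (real k + 2) * (fact (k+1) :: real)"
    by (simp add: algebra_simps)
  have CJ: "C * fact (1 + (k+1)) = a * (k+2)"
    unfolding fJ C_def by simp
  have I_up: "I \<le> 1 / t" using mom_bounds(2)[OF t0 C0, of 0 "k+1"] by (simp add: I_def wI)
  have I_lo0: "I \<ge> 1/t - C * (fact (0+(k+1)) / t^(0+(k+1)+1))"
    using mom_bounds(3)[OF t0 C0, of 0 "k+1"] by (simp add: I_def wI)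
  have J_up: "J \<le> 1 / t^2" using mom_bounds(2)[OF t0 C0, of 1 "k+1"] by (simp add: J_def wJ power2_eq_square)
  have J_lo0: "J \<ge> 1/t^2 - C * (fact (1+(k+1)) / t^(1+(k+1)+1))"
    using mom_bounds(3)[OF t0 C0, of 1 "k+1"] by (simp add: J_def wJ power2_eq_square)
  have J0: "J \<ge> 0" using mom_bounds(4)[OF t0 C0, of 1 "k+1"] by (simp add: J_def wJ)
  have p1: "t^2 \<le> t^(k+2)" using t1 by (intro power_increasing) auto
  have p2: "t^3 \<le> t^(k+3)" using t1 by (intro power_increasing) auto
  have I_lo: "I \<ge> 1/t - a/t^2"
  proof -
    have "C * (fact (0+(k+1)) / t^(0+(k+1)+1)) = a / t^(k+2)"
      using CI by (simp add: field_simps)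
    also have "\<dots> \<le> a / t^2" using p1 a t0 by (intro divide_left_mono) auto
    finally show ?thesis using I_lo0 by linarith
  qed
  have J_lo: "J \<ge> 1/t^2 - a*(k+2)/t^3"
  proof -
    have e: "1+(k+1)+1 = k+3" by simp
    have "C * (fact (1+(k+1)) / t^(1+(k+1)+1)) = (C * fact (1+(k+1))) / t^(k+3)"
      unfolding e by simp
    also have "\<dots> = a*(k+2) / t^(k+3)" using CJ by simp
    also have "\<dots> \<le> a*(k+2) / t^3" using p2 a t0 by (intro divide_left_mono) auto
    finally show ?thesis using J_lo0 by linarith
  qed
  have Ipos': "1/t - a/t^2 = (t - a)/t^2" using t0 by (simp add: field_simps power2_eq_square)
  have Ipos: "I > 0" using I_lo Ipos' ta t0 by (smt (verit) divide_pos_pos zero_less_power)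
  show "0 \<le> psi k a c" using J0 Ipos by (simp add: psi_eq)
  have "t * J / I \<ge> t * J / (1/t)"
    using Ipos I_up J0 t0 by (intro divide_left_mono) auto
  also have "t * J / (1/t) = t^2 * J" by (simp add: power2_eq_square)
  also have "t^2 * J \<ge> t^2 * (1/t^2 - a*(k+2)/t^3)" using J_lo t0 by (intro mult_left_mono) auto
  also have "t^2 * (1/t^2 - a*(k+2)/t^3) = 1 - a*(k+2)/t" using t0
    by (simp add: field_simps power2_eq_square power3_eq_cube)
  finally show "1 - a * real (k+2) / (-c) \<le> -c * psi k a c" by (simp add: psi_eq t_def)
  have "t * J / I \<le> t * (1/t^2) / ((t-a)/t^2)"
    using Ipos I_lo J0 J_up t0 ta Ipos' by (intro frac_le mult_left_mono) auto
  also have "\<dots> = t / (t - a)" using t0 ta by (simp add: field_simps power2_eq_square)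
  finally have up: "t * J / I \<le> t / (t - a)" .
  then show "-c * psi k a c \<le> (-c) / (-c - a)" by (simp add: psi_eq t_def)
  have "psi k a c = (t * J / I) / t" using t0 by (simp add: psi_eq)
  also have "\<dots> \<le> (t / (t - a)) / t" using up t0 by (intro divide_right_mono) auto
  also have "\<dots> = 1 / (-c - a)" using t0 by (simp add: t_def)
  finally show "psi k a c \<le> 1 / (-c - a)" .
qed

theorem lemma4:
  fixes k :: nat and a :: real
  assumes "k \<ge> 1" and "a > 0"
  shows "((\<lambda>c. bfun k a c) \<longlongrightarrow> sqrt 2) at_bot"
proof -
  have ev: "eventually (\<lambda>c. c < -1 \<and> c < -a) at_bot"
    by (intro eventually_conj eventually_gt_at_bot)
  have L1: "((\<lambda>c::real. 1 - a * (k+2) / (-c)) \<longlongrightarrow> 1) at_bot" by real_asymp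
  have L2: "((\<lambda>c::real. (-c) / (-c - a)) \<longlongrightarrow> 1) at_bot" by real_asymp
  have L3: "((\<lambda>c::real. 1 / (-c - a)) \<longlongrightarrow> 0) at_bot" by real_asymp
  have T1: "((\<lambda>c. -c * psi k a c) \<longlongrightarrow> 1) at_bot"
  proof (rule tendsto_sandwich[OF _ _ L1 L2])
    show "\<forall>\<^sub>F c in at_bot. 1 - a * real (k + 2) / - c \<le> - c * psi k a c"
      by (rule eventually_mono[OF ev]) (rule psi_bounds(1)[OF assms(2)]; simp)
    show "\<forall>\<^sub>F c in at_bot. - c * psi k a c \<le> - c / (- c - a)"
      by (rule eventually_mono[OF ev]) (rule psi_bounds(2)[OF assms(2)]; simp)
  qed
  have T2: "((\<lambda>c. psi k a c) \<longlongrightarrow> 0) at_bot"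
  proof (rule tendsto_sandwich[OF _ _ tendsto_const L3])
    show "\<forall>\<^sub>F c in at_bot. 0 \<le> psi k a c"
      by (rule eventually_mono[OF ev]) (rule psi_bounds(3)[OF assms(2)]; simp)
    show "\<forall>\<^sub>F c in at_bot. psi k a c \<le> 1 / (- c - a)"
      by (rule eventually_mono[OF ev]) (rule psi_bounds(4)[OF assms(2)]; simp)
  qed
  have "((\<lambda>c. sqrt (2 * \<bar>- c * psi k a c + a / fact k * psi k a c ^ (k + 1)\<bar>)) \<longlongrightarrow>
          sqrt (2 * \<bar>1 + a / fact k * 0 ^ (k + 1)\<bar>)) at_bot"
    by (intro tendsto_intros T1 T2)
  then show ?thesis by (simp add: bfun_def)
qed

end
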